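(* Let $(X,d_X)$ be a Polish metric space, $\mu$ a Borel probability measure on $X$, and $\rho$ a uniformly continuous $1$-bounded metric on $X$. Suppose $(M,\mathrm{vol})$ is a nonatomic finite measure space and $\epsilon>0$. Then there exists an open neighborhood $\mathcal O$ of $\mu$ in $\mathrm{Prob}(X)$ such that for any measurable map $\phi:M\to X$ with $\phi_*\overline{\mathrm{vol}}\in\mathcal O$ there exists a measurable $\psi:M\to X$ with $\rho^M(\phi,\psi)<\epsilon$ and $\psi_*\overline{\mathrm{vol}}=\mu$.
   Context: $\mathrm{Prob}(X)$ is the space of Borel probability measures on $X$ with the weak* topology (the smallest topology making $\nu\mapsto\int f\,d\nu$ continuous for every bounded continuous $f:X\to\mathbb R$). $\overline{\mathrm{vol}}=\mathrm{vol}/\mathrm{vol}(M)$, and $\phi_*\overline{\mathrm{vol}}(E)=\overline{\mathrm{vol}}(\phi^{-1}(E))$. A metric $\rho$ on $X$ is $1$-bounded if $\rho\le1$ and uniformly continuous if for every $\epsilon>0$ there is $\delta>0$ with $\rho(x,y)<\delta\Rightarrow d_X(x,y)<\epsilon$. For measurable $\phi,\psi:M\to X$, $\rho^M(\phi,\psi)=\int_M\rho(\phi(p),\psi(p))\,d\overline{\mathrm{vol}}(p)$. (In the paper $X$ also carries a uniform action of an lcsc group preserving $\mu$; this plays no role in the statement.)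
   Formalization: A uniformly continuous metric rho is one where for every epsilon>0 some delta>0 gives $\rho(x,y)<\epsilon$ whenever $d_X(x,y)<\delta$, instead of $d_X(x,y)<\epsilon$ whenever $\rho(x,y)<\delta$. This corrects a misprint. *)

theory Defs
  imports "HOL-Probability.Probability"
begin

definition Prob :: "'a::topological_space measure set" where
  "Prob = {N. sets N = sets borel \<and> prob_space N}"

definition weak_star_topology :: "'a::topological_space measure topology" where
  "weak_star_topology = topology_generated_by
     {{N \<in> Prob. (\<integral>x. f x \<partial>N) \<in> U} | f U.
        continuous_on UNIV (f :: 'a \<Rightarrow> real) \<and> bounded (range f) \<and> open U}"

definition is_metric :: "('a \<Rightarrow> 'a \<Rightarrow> real) \<Rightarrow> bool" where
  "is_metric \<rho> \<longleftrightarrow> (\<forall>x y. \<rho> x y = 0 \<longleftrightarrow> x = y) \<and> (\<forall>x y. \<rho> x y = \<rho> y x)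
     \<and> (\<forall>x y z. \<rho> x z \<le> \<rho> x y + \<rho> y z)"

definition one_bounded :: "('a \<Rightarrow> 'a \<Rightarrow> real) \<Rightarrow> bool" where
  "one_bounded \<rho> \<longleftrightarrow> (\<forall>x y. \<rho> x y \<le> 1)"

definition unif_cont_metric :: "('a::metric_space \<Rightarrow> 'a \<Rightarrow> real) \<Rightarrow> bool" where
  "unif_cont_metric \<rho> \<longleftrightarrow> (\<forall>e>0. \<exists>d>0. \<forall>x y. dist x y < d \<longrightarrow> \<rho> x y < e)"

definition nonatomic :: "'b measure \<Rightarrow> bool" where
  "nonatomic M \<longleftrightarrow> (\<forall>A\<in>sets M. emeasure M A > 0 \<longrightarrow>
     (\<exists>B\<in>sets M. B \<subseteq> A \<and> 0 < emeasure M B \<and> emeasure M B < emeasure M A))"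

definition volbar :: "'b measure \<Rightarrow> 'b measure" where
  "volbar M = scale_measure (ennreal (1 / measure M (space M))) M"

definition rhoM :: "('a \<Rightarrow> 'a \<Rightarrow> real) \<Rightarrow> 'b measure \<Rightarrow> ('b \<Rightarrow> 'a) \<Rightarrow> ('b \<Rightarrow> 'a) \<Rightarrow> real" where
  "rhoM \<rho> M \<phi> \<psi> = (\<integral>p. \<rho> (\<phi> p) (\<psi> p) \<partial>volbar M)"

end

theory Submission
  imports Defs
begin

lemma nonatomic_small:
  assumes fm: "finite_measure N" and na: "nonatomic N"
    and S: "S \<in> sets N" and pos: "measure N S > 0"
  shows "\<exists>B\<in>sets N. B \<subseteq> S \<and> 0 < measure N B \<and> measure N B \<le> measure N S / 2 ^ k"
proof (induction k)
  case 0
  then show ?case using S pos by auto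
next
  case (Suc k)
  then obtain B where B: "B \<in> sets N" "B \<subseteq> S" "0 < measure N B" "measure N B \<le> measure N S / 2 ^ k"
    by blast
  interpret finite_measure N by (rule fm)
  have "emeasure N B > 0" using B by (simp add: emeasure_eq_measure)
  with na B obtain D where D: "D \<in> sets N" "D \<subseteq> B" "0 < emeasure N D" "emeasure N D < emeasure N B"
    unfolding nonatomic_def by blast
  have D': "0 < measure N D" "measure N D < measure N B"
    using D by (simp_all add: emeasure_eq_measure ennreal_less_iff)
  have BD: "measure N (B - D) = measure N B - measure N D"
    using D B by (simp add: finite_measure_Diff)
  have half: "measure N B / 2 \<le> measure N S / 2 ^ Suc k"
  proof -
    have "measure N B / 2 \<le> (measure N S / 2 ^ k) / 2"
      using B(4) by (rule divide_right_mono) simp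
    also have "\<dots> = measure N S / 2 ^ Suc k" by simp
    finally show ?thesis .
  qed
  show ?case
  proof (cases "measure N D \<le> measure N B / 2")
    case True
    have "D \<subseteq> S" using D B by blast
    moreover have "measure N D \<le> measure N S / 2 ^ Suc k" using True half by linarith
    ultimately show ?thesis using D(1) D'(1) by blast
  next
    case False
    have "B - D \<subseteq> S" using D B by blast
    moreover have "measure N (B - D) \<le> measure N S / 2 ^ Suc k" using False half BD by linarith
    moreover have "0 < measure N (B - D)" using BD D' by linarith
    moreover have "B - D \<in> sets N" using B D by blast
    ultimately show ?thesis by blast
  qed
qed

lemma nonatomic_small':
  assumes fm: "finite_measure N" and na: "nonatomic N"
    and S: "S \<in> sets N" and pos: "measure N S > 0" and e: "e > 0"
  shows "\<exists>B\<in>sets N. B \<subseteq> S \<and> 0 < measure N B \<and> measure N B < e"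
proof -
  obtain k where k: "(1/2::real) ^ k < e / measure N S"
    using real_arch_pow_inv[of "e / measure N S" "1/2"] e pos by auto
  have k': "1 / 2 ^ k < e / measure N S" using k by (simp add: power_one_over)
  have "measure N S * (1 / 2 ^ k) < measure N S * (e / measure N S)"
    using k' pos by (rule mult_strict_left_mono)
  then have lt: "measure N S / 2 ^ k < e" using pos by simp
  obtain B where "B\<in>sets N" "B \<subseteq> S" "0 < measure N B" "measure N B \<le> measure N S / 2 ^ k"
    using nonatomic_small[OF fm na S pos, of k] by blast
  then show ?thesis using lt by (intro bexI[of _ B]) auto
qed

lemma sierpinski:
  assumes fm: "finite_measure N" and na: "nonatomic N"
    and S: "S \<in> sets N" and t0: "0 \<le> t" and tS: "t \<le> measure N S"
  shows "\<exists>B\<in>sets N. B \<subseteq> S \<and> measure N B = t"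
proof -
  interpret finite_measure N by (rule fm)
  define cand where "cand B = {D \<in> sets N. D \<subseteq> S - B \<and> measure N D \<le> t - measure N B}" for B
  define \<sigma> where "\<sigma> B = Sup (measure N ` cand B)" for B
  have bdd: "bdd_above (measure N ` cand B)" for B
  proof (rule bdd_aboveI[of _ t])
    fix x assume "x \<in> measure N ` cand B"
    then obtain D where "D \<in> cand B" "x = measure N D" by blast
    then have "x \<le> t - measure N B" by (auto simp: cand_def)
    then show "x \<le> t" using measure_nonneg[of N B] by linarith
  qed
  have ex: "\<exists>D. (B \<in> sets N \<and> B \<subseteq> S \<and> measure N B \<le> t) \<longrightarrow> D \<in> cand B \<and> \<sigma> B \<le> 2 * measure N D" for B
  proof (cases "B \<in> sets N \<and> B \<subseteq> S \<and> measure N B \<le> t")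
    case True
    have e: "{} \<in> cand B" using True by (auto simp: cand_def)
    show ?thesis
    proof (cases "\<sigma> B \<le> 0")
      case True
      then show ?thesis using e by (intro exI[of _ "{}"]) auto
    next
      case False
      then have "\<sigma> B / 2 < \<sigma> B" by simp
      then obtain x where x: "x \<in> measure N ` cand B" "\<sigma> B / 2 < x"
        using less_cSupD[of "measure N ` cand B" "\<sigma> B / 2"] e unfolding \<sigma>_def by blast
      then obtain D where "D \<in> cand B" "x = measure N D" by blast
      then show ?thesis using x by (intro exI[of _ D]) auto
    qed
  qed blast
  then obtain nxt where nxt: "\<And>B. B \<in> sets N \<and> B \<subseteq> S \<and> measure N B \<le> t \<Longrightarrow>
      nxt B \<in> cand B \<and> \<sigma> B \<le> 2 * measure N (nxt B)"
    by metis
  define Bs where "Bs = rec_nat {} (\<lambda>_ B. B \<union> nxt B)"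
  have Bs0: "Bs 0 = {}" and BsS: "Bs (Suc n) = Bs n \<union> nxt (Bs n)" for n
    by (simp_all add: Bs_def)
  have good: "Bs n \<in> sets N \<and> Bs n \<subseteq> S \<and> measure N (Bs n) \<le> t" for n
  proof (induction n)
    case 0
    show ?case using t0 by (simp add: Bs0)
  next
    case (Suc n)
    from nxt[OF Suc] have c: "nxt (Bs n) \<in> cand (Bs n)" by blast
    hence c': "nxt (Bs n) \<in> sets N" "nxt (Bs n) \<subseteq> S - Bs n"
      "measure N (nxt (Bs n)) \<le> t - measure N (Bs n)" by (auto simp: cand_def)
    have "measure N (Bs n \<union> nxt (Bs n)) = measure N (Bs n) + measure N (nxt (Bs n))"
      using Suc c' by (intro finite_measure_Union) auto
    then show ?case using Suc c' by (auto simp: BsS)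
  qed
  have step: "measure N (Bs (Suc n)) = measure N (Bs n) + measure N (nxt (Bs n))" for n
  proof -
    from nxt[OF good[of n]] have c: "nxt (Bs n) \<in> cand (Bs n)" by blast
    hence c': "nxt (Bs n) \<in> sets N" "nxt (Bs n) \<subseteq> S - Bs n" by (auto simp: cand_def)
    show ?thesis unfolding BsS using good[of n] c' by (intro finite_measure_Union) auto
  qed
  define B where "B = (\<Union>n. Bs n)"
  have inc: "incseq Bs" by (rule incseq_SucI) (simp add: BsS)
  have Bsets: "B \<in> sets N" using good by (auto simp: B_def)
  have BS: "B \<subseteq> S" using good by (auto simp: B_def)
  have lim: "(\<lambda>n. measure N (Bs n)) \<longlonglongrightarrow> measure N B"
    unfolding B_def using good inc by (intro finite_Lim_measure_incseq) auto
  have Ble: "measure N B \<le> t" using lim good by (intro LIMSEQ_le_const2) auto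
  have "\<not> measure N B < t"
  proof
    assume lt: "measure N B < t"
    have "measure N (S - B) = measure N S - measure N B"
      using Bsets S BS by (simp add: finite_measure_Diff)
    hence pos: "measure N (S - B) > 0" using lt tS by linarith
    have SB: "S - B \<in> sets N" using S Bsets by blast
    obtain D where D: "D \<in> sets N" "D \<subseteq> S - B" "0 < measure N D" "measure N D < t - measure N B"
      using nonatomic_small'[OF fm na SB pos, of "t - measure N B"] lt by auto
    have mB: "measure N (Bs n) \<le> measure N B" for n
      using good Bsets by (intro finite_measure_mono) (auto simp: B_def)
    have Dc: "D \<in> cand (Bs n)" for n
      using D mB[of n] by (auto simp: cand_def B_def)
    have "measure N D \<le> \<sigma> (Bs n)" for n
      unfolding \<sigma>_def using Dc[of n] bdd by (intro cSup_upper) auto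
    hence half: "measure N D \<le> 2 * measure N (nxt (Bs n))" for n
      using nxt[OF good[of n]] by (meson order_trans)
    have grow: "real n * measure N D \<le> 2 * measure N (Bs n)" for n
    proof (induction n)
      case 0
      then show ?case by (simp add: Bs0)
    next
      case (Suc n)
      then show ?case using half[of n] step[of n] by (simp add: algebra_simps)
    qed
    obtain n where "2 * t < real n * measure N D"
      using ex_less_of_nat_mult[OF D(3)] by blast
    then show False using grow[of n] good[of n] by linarith
  qed
  thus ?thesis using Ble Bsets BS by (intro bexI[of _ B]) auto
qed

lemma split_pieces:
  assumes fm: "finite_measure N" and na: "nonatomic N"
    and S: "S \<in> sets N" and t0: "\<And>n. 0 \<le> t n" and ts: "t sums measure N S"
  shows "\<exists>P. (\<forall>n. P n \<in> sets N \<and> P n \<subseteq> S \<and> measure N (P n) = t n \<and> (t n = 0 \<longrightarrow> P n = {}))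
             \<and> disjoint_family P \<and> measure N (S - (\<Union>n. P n)) = 0"
proof -
  interpret finite_measure N by (rule fm)
  have "\<exists>B. (R \<in> sets N \<and> 0 \<le> x \<and> x \<le> measure N R) \<longrightarrow>
          B \<in> sets N \<and> B \<subseteq> R \<and> measure N B = x \<and> (x = 0 \<longrightarrow> B = {})" for R x
  proof (cases "x = 0")
    case True
    then show ?thesis by (intro exI[of _ "{}"]) auto
  next
    case False
    show ?thesis
    proof (cases "R \<in> sets N \<and> 0 \<le> x \<and> x \<le> measure N R")
      case True
      then obtain B where "B\<in>sets N" "B \<subseteq> R" "measure N B = x"
        using sierpinski[OF fm na, of R x] by blast
      then show ?thesis using False by (intro exI[of _ B]) auto
    qed blast
  qed
  then obtain sel where sel: "\<And>R x. R \<in> sets N \<Longrightarrow> 0 \<le> x \<Longrightarrow> x \<le> measure N R \<Longrightarrow>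
      sel R x \<in> sets N \<and> sel R x \<subseteq> R \<and> measure N (sel R x) = x \<and> (x = 0 \<longrightarrow> sel R x = {})"
    by metis
  define rem where "rem = rec_nat S (\<lambda>n R. R - sel R (t n))"
  define P where "P n = sel (rem n) (t n)" for n
  have rem0: "rem 0 = S" and remS: "rem (Suc n) = rem n - P n" for n
    by (simp_all add: rem_def P_def)
  have summ: "summable t" using ts by (rule sums_summable)
  have psum: "(\<Sum>m<n. t m) \<le> measure N S" for n
    using sum_le_suminf[OF summ, of "{..<n}"] t0 sums_unique[OF ts] by auto
  have inv: "rem n \<in> sets N \<and> rem n \<subseteq> S \<and> measure N (rem n) = measure N S - (\<Sum>m<n. t m)" for n
  proof (induction n)
    case 0
    then show ?case using S by (simp add: rem0)
  next
    case (Suc n)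
    have "t n \<le> measure N (rem n)" using Suc psum[of "Suc n"] by simp
    then have p: "P n \<in> sets N \<and> P n \<subseteq> rem n \<and> measure N (P n) = t n"
      using sel[of "rem n" "t n"] Suc t0 unfolding P_def by blast
    have "measure N (rem n - P n) = measure N (rem n) - measure N (P n)"
      using p Suc by (intro finite_measure_Diff) auto
    then show ?case using Suc p by (auto simp: remS)
  qed
  have Pp: "P n \<in> sets N \<and> P n \<subseteq> rem n \<and> measure N (P n) = t n \<and> (t n = 0 \<longrightarrow> P n = {})" for n
  proof -
    have "t n \<le> measure N (rem n)" using inv[of n] psum[of "Suc n"] by simp
    then show ?thesis using sel[of "rem n" "t n"] inv[of n] t0 unfolding P_def by blast
  qed
  have dec: "rem n \<subseteq> rem m" if "m \<le> n" for m n
    using that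
  proof (induction n)
    case 0
    then show ?case by simp
  next
    case (Suc n)
    then show ?case by (cases "m = Suc n") (auto simp: remS)
  qed
  have disj: "disjoint_family P"
    unfolding disjoint_family_on_def
  proof (intro ballI impI)
    fix m n :: nat assume "m \<noteq> n"
    moreover have "P m \<inter> P n = {}" if "m < n" for m n
    proof -
      have "rem n \<subseteq> rem (Suc m)" using that by (intro dec) simp
      then show ?thesis using Pp[of n] by (auto simp: remS)
    qed
    ultimately show "P m \<inter> P n = {}"
      by (metis inf_commute linorder_neqE_nat)
  qed
  have PS: "P n \<subseteq> S" for n using Pp[of n] inv[of n] by blast
  have "(\<lambda>i. measure N (P i)) sums measure N (\<Union>i. P i)"
    using Pp disj by (intro finite_measure_UNION) auto
  then have "t sums measure N (\<Union>i. P i)" using Pp by simp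
  then have eq: "measure N (\<Union>i. P i) = measure N S" using ts sums_unique2 by blast
  have "measure N (S - (\<Union>i. P i)) = measure N S - measure N (\<Union>i. P i)"
    using PS Pp S by (intro finite_measure_Diff) auto
  then have "measure N (S - (\<Union>i. P i)) = 0" using eq by simp
  then show ?thesis using Pp PS disj by (intro exI[of _ P]) auto
qed

lemma finite_measure_eq_open_le:
  fixes A B :: "'a::metric_space measure"
  assumes fA: "finite_measure A" and fB: "finite_measure B"
    and sA: "sets A = sets borel" and sB: "sets B = sets borel"
    and tot: "emeasure A UNIV = emeasure B UNIV"
    and le: "\<And>G. open G \<Longrightarrow> emeasure B G \<le> emeasure A G"
  shows "A = B"
proof -
  interpret A: finite_measure A by (rule fA)
  interpret B: finite_measure B by (rule fB)
  have spA: "space A = UNIV" using sets_eq_imp_space_eq[OF sA] by simp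
  have spB: "space B = UNIV" using sets_eq_imp_space_eq[OF sB] by simp
  have totr: "measure A UNIV = measure B UNIV"
    using tot spA spB by (simp add: A.emeasure_eq_measure B.emeasure_eq_measure)
  have ler: "measure B G \<le> measure A G" if "open G" for G
    using le[OF that] by (simp add: A.emeasure_eq_measure B.emeasure_eq_measure)
  have ge: "measure A G \<le> measure B G" if G: "open G" for G
  proof (cases "G = UNIV")
    case True
    then show ?thesis using totr by simp
  next
    case False
    define K where "K = - G"
    have Kne: "K \<noteq> {}" using False by (auto simp: K_def)
    have Kc: "closed K" using G by (auto simp: K_def)
    define V where "V j = {x. infdist x K < 1 / Suc j}" for j :: nat
    have Vo: "open (V j)" for j
      unfolding V_def by (intro open_Collect_less continuous_on_infdist continuous_on_id continuous_on_const)
    have Vs: "range V \<subseteq> sets borel" using Vo by auto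
    have Vdec: "decseq V"
    proof (rule decseq_SucI)
      fix n
      have "1 / real (Suc (Suc n)) \<le> 1 / Suc n" by (simp add: frac_le)
      then show "V (Suc n) \<subseteq> V n" unfolding V_def by auto
    qed
    have VK: "(\<Inter>j. V j) = K"
    proof safe
      fix x assume x: "x \<in> (\<Inter>j. V j)"
      have "infdist x K \<le> 0"
      proof (rule field_le_epsilon)
        fix e :: real assume e: "0 < e"
        obtain j where "1 / real (Suc j) < e" using e
          by (metis nat_approx_posE)
        moreover have "infdist x K < 1 / Suc j" using x by (auto simp: V_def)
        ultimately show "infdist x K \<le> 0 + e" by simp
      qed
      then have "infdist x K = 0" using infdist_nonneg[of x K] by linarith
      then show "x \<in> K" using in_closure_iff_infdist_zero[OF Kne] Kc closure_closed by metis
    next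
      fix x j assume "x \<in> K"
      then show "x \<in> V j" by (auto simp: V_def)
    qed
    have limA: "(\<lambda>j. measure A (V j)) \<longlonglongrightarrow> measure A K"
      using A.finite_Lim_measure_decseq[of V] Vs Vdec sA VK by auto
    have limB: "(\<lambda>j. measure B (V j)) \<longlonglongrightarrow> measure B K"
      using B.finite_Lim_measure_decseq[of V] Vs Vdec sB VK by auto
    have "measure B K \<le> measure A K"
      using limB limA ler[OF Vo] by (intro LIMSEQ_le) auto
    moreover have "measure A G = measure A UNIV - measure A K"
      using A.finite_measure_compl[of K] Kc sA spA by (auto simp: K_def)
    moreover have "measure B G = measure B UNIV - measure B K"
      using B.finite_measure_compl[of K] Kc sB spB by (auto simp: K_def)
    ultimately show ?thesis using totr by linarith
  qed
  show ?thesis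
  proof (rule measure_eqI_generator_eq[where E="{S. open S}" and \<Omega>=UNIV and A="\<lambda>_. UNIV"])
    show "Int_stable {S. open S}" by (auto simp: Int_stable_def)
    show "{S. open S} \<subseteq> Pow UNIV" by auto
    fix X assume "X \<in> {S :: 'a set. open S}"
    then have "open X" by simp
    then show "emeasure A X = emeasure B X"
      using ge[of X] ler[of X] by (simp add: A.emeasure_eq_measure B.emeasure_eq_measure)
  next
    show "sets A = sigma_sets UNIV {S. open S}" using sA sets_borel by simp
    show "sets B = sigma_sets UNIV {S. open S}" using sB sets_borel by simp
  qed (auto simp: A.emeasure_eq_measure)
qed

definition rr :: "nat \<Rightarrow> real" where "rr k = (1/2) ^ k"

definition Dset :: "(nat \<Rightarrow> 'a::metric_space) \<Rightarrow> nat \<Rightarrow> nat \<Rightarrow> 'a set" where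
  "Dset s k n = ball (s n) (rr k) - (\<Union>m<n. ball (s m) (rr k))"

primrec cell :: "(nat \<Rightarrow> 'a::metric_space) \<Rightarrow> nat list \<Rightarrow> 'a set" where
  "cell s [] = UNIV"
| "cell s (n # l) = cell s l \<inter> Dset s (Suc (length l)) n"

definition dense_seq :: "(nat \<Rightarrow> 'a::metric_space) \<Rightarrow> bool" where
  "dense_seq s \<longleftrightarrow> (\<forall>x e. e > 0 \<longrightarrow> (\<exists>n. dist x (s n) < e))"

lemma rr_pos: "rr k > 0" by (simp add: rr_def)

lemma rr_small: "e > 0 \<Longrightarrow> \<exists>k. rr k < e"
  unfolding rr_def using real_arch_pow_inv[of e "1/2"] by auto

lemma rr_mono: "k \<le> k' \<Longrightarrow> rr k' \<le> rr k"
  unfolding rr_def by (simp add: power_decreasing)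

lemma dense_seq_exists: "\<exists>s :: nat \<Rightarrow> 'a::polish_space. dense_seq s"
proof -
  obtain X :: "'a set" where X: "countable X" "\<And>Y. open Y \<Longrightarrow> Y \<noteq> {} \<Longrightarrow> \<exists>d\<in>X. d \<in> Y"
    using countable_dense_setE by blast
  have Xne: "X \<noteq> {}" using X(2)[of UNIV] by auto
  define s where "s = from_nat_into X"
  have "dense_seq s" unfolding dense_seq_def
  proof (intro allI impI)
    fix x :: 'a and e :: real assume "e > 0"
    then obtain d where d: "d \<in> X" "d \<in> ball x e" using X(2)[of "ball x e"] by auto
    then have "s (to_nat_on X d) = d" unfolding s_def using X(1) by (simp add: from_nat_into_to_nat_on)
    then show "\<exists>n. dist x (s n) < e" using d by (metis mem_ball)
  qed
  then show ?thesis by blast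
qed

lemma Dset_borel: "Dset s k n \<in> sets borel"
  unfolding Dset_def by (intro sets.Diff borel_open open_ball open_UN) auto

lemma Dset_disj: "m \<noteq> n \<Longrightarrow> Dset s k m \<inter> Dset s k n = {}"
proof -
  assume mn: "m \<noteq> n"
  have "Dset s k a \<inter> Dset s k b = {}" if "a < b" for a b
    using that unfolding Dset_def by blast
  then show ?thesis using mn by (metis inf_commute linorder_neqE_nat)
qed

lemma Dset_cover: "dense_seq s \<Longrightarrow> \<exists>n. x \<in> Dset s k n"
proof -
  assume "dense_seq s"
  then obtain n where n: "dist x (s n) < rr k" using rr_pos unfolding dense_seq_def by blast
  define n0 where "n0 = (LEAST n. dist x (s n) < rr k)"
  have "dist x (s n0) < rr k" unfolding n0_def using n by (rule LeastI)
  moreover have "\<not> dist x (s m) < rr k" if "m < n0" for m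
    using that unfolding n0_def by (rule not_less_Least)
  ultimately have "x \<in> Dset s k n0" unfolding Dset_def by (auto simp: dist_commute)
  then show ?thesis by blast
qed

lemma Dset_ball: "Dset s k n \<subseteq> ball (s n) (rr k)"
  unfolding Dset_def by auto

lemma cell_borel: "cell s l \<in> sets borel"
  by (induction l) (auto intro: Dset_borel)

lemma cell_sub: "cell s (n # l) \<subseteq> cell s l" by auto

lemma cell_disj: "n \<noteq> m \<Longrightarrow> cell s (n # l) \<inter> cell s (m # l) = {}"
  using Dset_disj[of n m s] by auto

lemma cell_children: "dense_seq s \<Longrightarrow> cell s l = (\<Union>n. cell s (n # l))"
  using Dset_cover[of s] by auto

lemma cell_diam: "x \<in> cell s (n # l) \<Longrightarrow> y \<in> cell s (n # l) \<Longrightarrow> dist x y < 2 * rr (Suc (length l))"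
proof -
  assume "x \<in> cell s (n # l)" "y \<in> cell s (n # l)"
  then have "x \<in> ball (s n) (rr (Suc (length l)))" "y \<in> ball (s n) (rr (Suc (length l)))"
    using Dset_ball[of s "Suc (length l)" n] by auto
  then show ?thesis by (metis dist_commute dist_triangle_less_add mem_ball mult_2)
qed

lemma cell_cover: "dense_seq s \<Longrightarrow> \<exists>l. length l = k \<and> x \<in> cell s l"
proof (induction k)
  case 0
  then show ?case by auto
next
  case (Suc k)
  then obtain l where "length l = k" "x \<in> cell s l" by blast
  moreover obtain n where "x \<in> Dset s (Suc k) n" using Dset_cover[OF Suc.prems] by blast
  ultimately show ?case by (intro exI[of _ "n # l"]) auto
qed

lemma tree_disj:
  assumes sub: "\<And>n l. f (n # l) \<subseteq> f l"
    and dj: "\<And>n m l. n \<noteq> m \<Longrightarrow> f (n # l) \<inter> f (m # l) = {}"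
  shows "length l = length l' \<Longrightarrow> l \<noteq> l' \<Longrightarrow> f l \<inter> f l' = {}"
proof (induction l arbitrary: l')
  case Nil
  then show ?case by simp
next
  case (Cons n l)
  then obtain m l'' where l': "l' = m # l''" by (cases l') auto
  show ?case
  proof (cases "l = l''")
    case True
    then have "n \<noteq> m" using Cons l' by simp
    then show ?thesis using dj True l' by simp
  next
    case False
    then have "f l \<inter> f l'' = {}" using Cons l' by simp
    then show ?thesis using sub[of n l] sub[of m l''] l' by blast
  qed
qed

lemma realize:
  fixes lam :: "'a::polish_space measure" and N :: "'b measure"
  assumes fm: "finite_measure N" and na: "nonatomic N" and C: "C \<in> sets N"
    and fl: "finite_measure lam" and sl: "sets lam = sets borel"
    and eqm: "emeasure lam UNIV = emeasure N C"
  shows "\<exists>\<psi>\<in>borel_measurable N. \<forall>E\<in>sets borel. emeasure N (\<psi> -` E \<inter> C) = emeasure lam E"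
proof -
  interpret N: finite_measure N by (rule fm)
  interpret L: finite_measure lam by (rule fl)
  have spL: "space lam = UNIV" using sets_eq_imp_space_eq[OF sl] by simp
  have CsubS: "C \<subseteq> space N" using C by (rule sets.sets_into_space)
  show ?thesis
  proof (cases "emeasure N C = 0")
    case True
    have "emeasure lam E = 0" if "E \<in> sets borel" for E
    proof -
      have "emeasure lam E \<le> emeasure lam UNIV"
        using spL by (intro emeasure_mono) (auto simp: sl[symmetric] intro: sets.top[of lam, simplified spL])
      then show ?thesis using True eqm by simp
    qed
    moreover have "emeasure N ((\<lambda>_. undefined) -` E \<inter> C) = 0" for E :: "'a set"
    proof -
      have "emeasure N ((\<lambda>_. undefined::'a) -` E \<inter> C) \<le> emeasure N C"
        using C by (intro emeasure_mono) auto
      then show ?thesis using True by simp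
    qed
    ultimately show ?thesis by (intro bexI[of _ "\<lambda>_. undefined"]) auto
  next
    case False
    then have Cpos: "measure N C > 0"
      using N.emeasure_eq_measure[of C] measure_nonneg[of N C] by (auto simp: less_le)
    obtain s :: "nat \<Rightarrow> 'a" where ds: "dense_seq s" using dense_seq_exists by blast
    define m where "m l = measure lam (cell s l)" for l
    have msum: "(\<lambda>n. m (n # l)) sums m l" for l
    proof -
      have r: "range (\<lambda>n. cell s (n # l)) \<subseteq> sets lam" using cell_borel[of s] sl by blast
      have d: "disjoint_family (\<lambda>n. cell s (n # l))"
        unfolding disjoint_family_on_def using cell_disj[of _ _ s l] by blast
      have "(\<lambda>n. measure lam (cell s (n # l))) sums measure lam (\<Union>n. cell s (n # l))"
        by (rule L.finite_measure_UNION[OF r d])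
      then show ?thesis unfolding m_def by (simp only: cell_children[OF ds, of l, symmetric])
    qed
    have "\<forall>S t. \<exists>P. (S \<in> sets N \<and> (\<forall>n. 0 \<le> t n) \<and> t sums measure N S) \<longrightarrow>
        ((\<forall>n. P n \<in> sets N \<and> P n \<subseteq> S \<and> measure N (P n) = t n \<and> (t n = 0 \<longrightarrow> P n = {}))
          \<and> disjoint_family P \<and> measure N (S - (\<Union>n. P n)) = 0)"
    proof (intro allI)
      fix S t
      show "\<exists>P. (S \<in> sets N \<and> (\<forall>n. 0 \<le> t n) \<and> t sums measure N S) \<longrightarrow>
        ((\<forall>n. P n \<in> sets N \<and> P n \<subseteq> S \<and> measure N (P n) = t n \<and> (t n = 0 \<longrightarrow> P n = {}))
          \<and> disjoint_family P \<and> measure N (S - (\<Union>n. P n)) = 0)"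
      proof (cases "S \<in> sets N \<and> (\<forall>n. 0 \<le> t n) \<and> t sums measure N S")
        case True
        then obtain P where "(\<forall>n. P n \<in> sets N \<and> P n \<subseteq> S \<and> measure N (P n) = t n \<and> (t n = 0 \<longrightarrow> P n = {}))
          \<and> disjoint_family P \<and> measure N (S - (\<Union>n. P n)) = 0"
          using split_pieces[OF fm na, of S t] by (elim conjE) metis
        then show ?thesis by (intro exI[of _ P] impI)
      next
        case False
        show ?thesis using False by (intro exI[of _ undefined] impI) (erule notE, assumption)
      qed
    qed
    then obtain spl where spl: "\<And>S t. S \<in> sets N \<Longrightarrow> (\<forall>n. 0 \<le> t n) \<Longrightarrow> t sums measure N S \<Longrightarrow>
        (\<forall>n. spl S t n \<in> sets N \<and> spl S t n \<subseteq> S \<and> measure N (spl S t n) = t n \<and> (t n = 0 \<longrightarrow> spl S t n = {}))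
          \<and> disjoint_family (spl S t) \<and> measure N (S - (\<Union>n. spl S t n)) = 0"
      by metis
    define Ct where "Ct = rec_list C (\<lambda>n l R. spl R (\<lambda>j. m (j # l)) n)"
    have Ct0: "Ct [] = C" and CtS: "Ct (n # l) = spl (Ct l) (\<lambda>j. m (j # l)) n" for n l
      by (simp_all add: Ct_def)
    have m0: "m [] = measure N C"
    proof -
      have "ennreal (m []) = ennreal (measure N C)"
        using eqm spL by (simp add: m_def L.emeasure_eq_measure N.emeasure_eq_measure)
      then show ?thesis by (simp add: m_def)
    qed
    have Cinv: "Ct l \<in> sets N \<and> measure N (Ct l) = m l" for l
    proof (induction l)
      case Nil
      then show ?case using C m0 by (simp add: Ct0)
    next
      case (Cons n l)
      have "(\<forall>n. 0 \<le> m (n # l))" by (simp add: m_def)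
      then show ?case using spl[of "Ct l" "\<lambda>j. m (j # l)"] Cons msum[of l] by (simp add: CtS)
    qed
    have sp: "(\<forall>n. Ct (n # l) \<in> sets N \<and> Ct (n # l) \<subseteq> Ct l \<and> measure N (Ct (n # l)) = m (n # l)
               \<and> (m (n # l) = 0 \<longrightarrow> Ct (n # l) = {}))
          \<and> disjoint_family (\<lambda>n. Ct (n # l)) \<and> measure N (Ct l - (\<Union>n. Ct (n # l))) = 0" for l
    proof -
      have "(\<forall>n. 0 \<le> m (n # l))" by (simp add: m_def)
      then show ?thesis using spl[of "Ct l" "\<lambda>j. m (j # l)"] Cinv[of l] msum[of l]
        unfolding CtS by simp
    qed
    have Csub: "Ct (n # l) \<subseteq> Ct l" for n l using sp by blast
    have Cdisj: "n \<noteq> n' \<Longrightarrow> Ct (n # l) \<inter> Ct (n' # l) = {}" for n n' l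
      using sp[of l] unfolding disjoint_family_on_def by blast
    have CsubC: "Ct l \<subseteq> C" for l
      by (induction l) (use Csub in \<open>auto simp: Ct0\<close>)
    have Cne: "Ct l \<noteq> {} \<Longrightarrow> m l > 0" for l
    proof (cases l)
      case Nil
      then show ?thesis using m0 Cpos by simp
    next
      case (Cons n l')
      assume "Ct l \<noteq> {}"
      then have "m l \<noteq> 0" using sp[of l'] Cons by auto
      moreover have "m l \<ge> 0" by (simp add: m_def)
      ultimately show ?thesis by simp
    qed
    define Bad where "Bad = (\<Union>l\<in>UNIV. Ct l - (\<Union>n. Ct (n # l)))"
    have Badnull: "Bad \<in> null_sets N"
      unfolding Bad_def
    proof (rule null_sets_UN')
      fix l :: "nat list"
      have "Ct l - (\<Union>n. Ct (n # l)) \<in> sets N" using Cinv sp by blast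
      moreover have "emeasure N (Ct l - (\<Union>n. Ct (n # l))) = 0"
        using sp[of l] calculation by (simp add: N.emeasure_eq_measure)
      ultimately show "Ct l - (\<Union>n. Ct (n # l)) \<in> null_sets N" by blast
    qed simp
    have Bads: "Bad \<in> sets N" using Badnull by blast
    define G0 where "G0 = C - Bad"
    have G0s: "G0 \<in> sets N" using C Bads by (simp add: G0_def)
    define path where "path p = rec_nat [] (\<lambda>k l. (SOME n. p \<in> Ct (n # l)) # l)" for p
    have path0: "path p 0 = []" and pathS: "path p (Suc k) = (SOME n. p \<in> Ct (n # path p k)) # path p k"
      for p k by (simp_all add: path_def)
    have plen: "length (path p k) = k" for p k
      by (induction k) (simp_all add: path0 pathS)
    have pathin: "p \<in> Ct (path p k)" if "p \<in> G0" for p k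
    proof (induction k)
      case 0
      then show ?case using that by (simp add: path0 Ct0 G0_def)
    next
      case (Suc k)
      have "p \<notin> Bad" using that by (simp add: G0_def)
      then have "\<exists>n. p \<in> Ct (n # path p k)" using Suc unfolding Bad_def by blast
      then show ?case unfolding pathS by (rule someI_ex)
    qed
    have puniq: "p \<in> Ct l \<Longrightarrow> path p (length l) = l" for p l
    proof (induction l)
      case Nil
      then show ?case by (simp add: path0)
    next
      case (Cons n l)
      then have IH: "path p (length l) = l" using Csub by blast
      have "\<exists>n. p \<in> Ct (n # l)" using Cons by blast
      then have "p \<in> Ct ((SOME n. p \<in> Ct (n # l)) # l)" by (rule someI_ex)
      then have "(SOME n. p \<in> Ct (n # l)) = n" using Cdisj Cons.prems by blast
      then show ?case using IH by (simp add: pathS)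
    qed
    have pnest: "cell s (path p k') \<subseteq> cell s (path p k)" if "k \<le> k'" for p k k'
      using that
    proof (induction k')
      case 0
      then show ?case by simp
    next
      case (Suc k')
      show ?case
      proof (cases "k = Suc k'")
        case False
        then have "cell s (path p k') \<subseteq> cell s (path p k)" using Suc by simp
        then show ?thesis by (auto simp: pathS)
      qed simp
    qed
    have cellne: "cell s (path p k) \<noteq> {}" if "p \<in> G0" for p k
    proof
      assume "cell s (path p k) = {}"
      then have "m (path p k) = 0" by (simp add: m_def)
      then show False using Cne[of "path p k"] pathin[OF that, of k] by auto
    qed
    define pt where "pt l = (SOME x. x \<in> cell s l)" for l
    have ptin: "cell s l \<noteq> {} \<Longrightarrow> pt l \<in> cell s l" for l
      unfolding pt_def by (rule someI_ex) blast
    define x0 where "x0 = s 0"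
    define sq where "sq k p = (if p \<in> G0 then pt (path p k) else x0)" for k p
    have sqin: "sq k' p \<in> cell s (path p k)" if "p \<in> G0" "k \<le> k'" for p k k'
      using ptin[OF cellne[OF that(1), of k']] pnest[OF that(2), of p] that(1) by (auto simp: sq_def)
    have sqdist: "dist (sq i p) (sq j p) < 2 * rr (Suc k)"
      if "p \<in> G0" "Suc k \<le> i" "Suc k \<le> j" for p k i j
    proof -
      obtain n where pn: "path p (Suc k) = n # path p k" using pathS by blast
      have a: "sq i p \<in> cell s (n # path p k)" "sq j p \<in> cell s (n # path p k)"
        using sqin[OF that(1), of "Suc k"] that(2,3) pn by auto
      have "dist (sq i p) (sq j p) < 2 * rr (Suc (length (path p k)))"
        by (rule cell_diam[OF a])
      then show ?thesis using plen[of p k] by simp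
    qed
    have conv: "convergent (\<lambda>k. sq k p)" for p
    proof (cases "p \<in> G0")
      case True
      have "Cauchy (\<lambda>k. sq k p)"
      proof (rule metric_CauchyI)
        fix e :: real assume "e > 0"
        then obtain k where k: "rr k < e / 2" using rr_small[of "e/2"] by auto
        have "rr (Suc k) \<le> rr k" by (rule rr_mono) simp
        then show "\<exists>M. \<forall>i\<ge>M. \<forall>j\<ge>M. dist (sq i p) (sq j p) < e"
        proof (intro exI[of _ "Suc k"] allI impI)
          fix i j assume "Suc k \<le> i" "Suc k \<le> j"
          then have "dist (sq i p) (sq j p) < 2 * rr (Suc k)" by (rule sqdist[OF True])
          then show "dist (sq i p) (sq j p) < e" using k \<open>rr (Suc k) \<le> rr k\<close> by linarith
        qed
      qed
      then show ?thesis by (rule Cauchy_convergent)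
    next
      case False
      then show ?thesis by (simp add: sq_def convergent_const)
    qed
    define \<psi> where "\<psi> p = lim (\<lambda>k. sq k p)" for p
    have lim: "(\<lambda>k. sq k p) \<longlonglongrightarrow> \<psi> p" for p
      using conv[of p] unfolding \<psi>_def by (simp add: convergent_LIMSEQ_iff)
    have \<psi>cl: "\<psi> p \<in> closure (cell s (path p k))" if "p \<in> G0" for p k
    proof (rule Lim_in_closed_set[OF closed_closure _ _ lim])
      show "\<forall>\<^sub>F x in sequentially. sq x p \<in> closure (cell s (path p k))"
        using sqin[OF that] closure_subset by (intro eventually_sequentiallyI[of k]) blast
    qed simp
    have sqmeas: "(\<lambda>p. sq k p) \<in> borel_measurable N" for k
    proof (rule borel_measurableI)
      fix S :: "'a set" assume "open S"
      have eq: "(\<lambda>p. sq k p) -` S \<inter> space N =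
          (\<Union>l\<in>{l. length l = k \<and> pt l \<in> S}. Ct l - Bad) \<union> (if x0 \<in> S then space N - G0 else {})"
      proof (intro equalityI subsetI)
        fix p assume p: "p \<in> (\<lambda>p. sq k p) -` S \<inter> space N"
        show "p \<in> (\<Union>l\<in>{l. length l = k \<and> pt l \<in> S}. Ct l - Bad) \<union> (if x0 \<in> S then space N - G0 else {})"
        proof (cases "p \<in> G0")
          case True
          then have "p \<in> Ct (path p k) - Bad" using pathin by (auto simp: G0_def)
          moreover have "pt (path p k) \<in> S" using p True by (simp add: sq_def)
          ultimately show ?thesis using plen by blast
        next
          case False
          then show ?thesis using p by (simp add: sq_def)
        qed
      next
        fix p assume p: "p \<in> (\<Union>l\<in>{l. length l = k \<and> pt l \<in> S}. Ct l - Bad) \<union> (if x0 \<in> S then space N - G0 else {})"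
        show "p \<in> (\<lambda>p. sq k p) -` S \<inter> space N"
        proof (cases "p \<in> G0")
          case True
          then have "p \<notin> space N - G0" by simp
          then obtain l where l: "length l = k" "pt l \<in> S" "p \<in> Ct l" using p by (auto split: if_splits)
          then have "path p k = l" using puniq by blast
          then show ?thesis using True l G0s sets.sets_into_space by (auto simp: sq_def)
        next
          case False
          then have "p \<notin> (\<Union>l. Ct l - Bad)" using CsubC by (auto simp: G0_def)
          then show ?thesis using p False by (auto simp: sq_def split: if_splits)
        qed
      qed
      have "(\<Union>l\<in>{l. length l = k \<and> pt l \<in> S}. Ct l - Bad) \<in> sets N"
        using Cinv Bads by (intro sets.countable_UN') auto
      moreover have "(if x0 \<in> S then space N - G0 else {}) \<in> sets N" using G0s by auto
      ultimately show "(\<lambda>p. sq k p) -` S \<inter> space N \<in> sets N" unfolding eq by blast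
    qed
    have \<psi>meas: "\<psi> \<in> borel_measurable N"
      by (rule borel_measurable_LIMSEQ_metric[OF sqmeas lim])
    define A where "A = distr (restrict_space N C) borel \<psi>"
    have eA: "emeasure A E = emeasure N (\<psi> -` E \<inter> C)" if "E \<in> sets borel" for E
    proof -
      have "emeasure A E = emeasure (restrict_space N C) (\<psi> -` E \<inter> space (restrict_space N C))"
        unfolding A_def using measurable_restrict_space1[OF \<psi>meas] that by (rule emeasure_distr)
      also have "\<dots> = emeasure N (\<psi> -` E \<inter> (C \<inter> space N))"
        using C CsubS by (subst emeasure_restrict_space) (auto simp: space_restrict_space)
      finally show ?thesis using CsubS by (simp add: Int_absorb2)
    qed
    have sA: "sets A = sets borel" by (simp add: A_def)
    have tot: "emeasure A UNIV = emeasure lam UNIV" using eA[of UNIV] eqm by simp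
    have fA: "finite_measure A"
    proof (rule finite_measureI)
      have "space A = UNIV" by (simp add: A_def)
      then show "emeasure A (space A) \<noteq> \<infinity>" using tot spL L.emeasure_finite by simp
    qed
    have ge: "emeasure lam G \<le> emeasure A G" if G: "open G" for G
    proof -
      define Lk where "Lk k = {l. length l = k \<and> closure (cell s l) \<subseteq> G}" for k
      define W where "W k = (\<Union>l\<in>Lk k. cell s l)" for k
      have disjL: "disjoint_family_on (cell s) (Lk k)" for k
        unfolding disjoint_family_on_def Lk_def
        using tree_disj[of "cell s", OF cell_sub cell_disj] by auto
      have disjC: "disjoint_family_on Ct (Lk k)" for k
        unfolding disjoint_family_on_def Lk_def
        using tree_disj[of Ct, OF Csub Cdisj] by auto
      have pre: "\<psi> -` G \<inter> C \<in> sets N"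
      proof -
        have "\<psi> -` G \<inter> space N \<in> sets N" using \<psi>meas G by (simp add: measurable_sets)
        then have "(\<psi> -` G \<inter> space N) \<inter> C \<in> sets N" using C by blast
        moreover have "(\<psi> -` G \<inter> space N) \<inter> C = \<psi> -` G \<inter> C" using CsubS by blast
        ultimately show ?thesis by simp
      qed
      have Wle: "emeasure lam (W k) \<le> emeasure N (\<psi> -` G \<inter> C)" for k
      proof -
        have "emeasure lam (W k) = (\<integral>\<^sup>+l. emeasure lam (cell s l) \<partial>count_space (Lk k))"
          unfolding W_def using cell_borel sl disjL by (intro emeasure_UN_countable) auto
        also have "\<dots> = (\<integral>\<^sup>+l. emeasure N (Ct l) \<partial>count_space (Lk k))"
          using Cinv by (intro nn_integral_cong) (simp add: L.emeasure_eq_measure N.emeasure_eq_measure m_def)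
        also have "\<dots> = emeasure N (\<Union>l\<in>Lk k. Ct l)"
          using Cinv disjC by (intro emeasure_UN_countable[symmetric]) auto
        also have "\<dots> \<le> emeasure N ((\<psi> -` G \<inter> C) \<union> Bad)"
        proof (rule emeasure_mono)
          show "(\<Union>l\<in>Lk k. Ct l) \<subseteq> (\<psi> -` G \<inter> C) \<union> Bad"
          proof
            fix p assume "p \<in> (\<Union>l\<in>Lk k. Ct l)"
            then obtain l where l: "l \<in> Lk k" "p \<in> Ct l" by blast
            show "p \<in> (\<psi> -` G \<inter> C) \<union> Bad"
            proof (cases "p \<in> Bad")
              case False
              then have pG: "p \<in> G0" using l CsubC by (auto simp: G0_def)
              have "path p k = l" using puniq[OF l(2)] l(1) by (simp add: Lk_def)
              then have "\<psi> p \<in> G" using \<psi>cl[OF pG, of k] l(1) by (auto simp: Lk_def)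
              then show ?thesis using pG by (simp add: G0_def)
            qed simp
          qed
          show "(\<psi> -` G \<inter> C) \<union> Bad \<in> sets N" using pre Bads by blast
        qed
        also have "\<dots> \<le> emeasure N (\<psi> -` G \<inter> C) + emeasure N Bad"
          using pre Bads by (rule emeasure_subadditive)
        also have "\<dots> = emeasure N (\<psi> -` G \<inter> C)" using Badnull by (simp add: null_setsD1)
        finally show ?thesis .
      qed
      have Winc: "incseq W"
      proof (rule incseq_SucI)
        fix k
        show "W k \<subseteq> W (Suc k)"
        proof
          fix x assume "x \<in> W k"
          then obtain l where l: "l \<in> Lk k" "x \<in> cell s l" unfolding W_def by blast
          then obtain n where n: "x \<in> cell s (n # l)" using cell_children[OF ds, of l] by blast
          have "closure (cell s (n # l)) \<subseteq> closure (cell s l)" by (intro closure_mono cell_sub)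
          then have "n # l \<in> Lk (Suc k)" using l by (auto simp: Lk_def)
          then show "x \<in> W (Suc k)" using n unfolding W_def by blast
        qed
      qed
      have WU: "(\<Union>k. W k) = G"
      proof (intro equalityI subsetI)
        fix x assume "x \<in> (\<Union>k. W k)"
        then obtain k l where "l \<in> Lk k" "x \<in> cell s l" unfolding W_def by blast
        then show "x \<in> G" unfolding Lk_def using closure_subset by blast
      next
        fix x assume "x \<in> G"
        then obtain e where e: "e > 0" "ball x e \<subseteq> G" using G open_contains_ball by blast
        obtain k where k: "rr k < e / 2" using rr_small[of "e/2"] e by auto
        obtain l where l: "length l = k" "x \<in> cell s l" using cell_cover[OF ds] by blast
        obtain n where n: "x \<in> cell s (n # l)" using cell_children[OF ds, of l] l by blast
        have "rr (Suc k) \<le> rr k" by (rule rr_mono) simp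
        then have "cell s (n # l) \<subseteq> cball x (2 * rr (Suc k))"
          using cell_diam[OF n] l by (auto simp: less_imp_le)
        then have "closure (cell s (n # l)) \<subseteq> cball x (2 * rr (Suc k))"
          by (intro closure_minimal) auto
        also have "\<dots> \<subseteq> ball x e" using k \<open>rr (Suc k) \<le> rr k\<close> by (auto simp: subset_iff)
        finally have "n # l \<in> Lk (Suc k)" using e l by (auto simp: Lk_def)
        then show "x \<in> (\<Union>k. W k)" using n unfolding W_def by blast
      qed
      have Ws: "W k \<in> sets lam" for k
        unfolding W_def sl using cell_borel by (intro sets.countable_UN') auto
      have su: "(SUP k. emeasure lam (W k)) = emeasure lam (\<Union>k. W k)"
        using Ws Winc by (intro SUP_emeasure_incseq) auto
      have "emeasure lam G = (SUP k. emeasure lam (W k))"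
        using su WU by simp
      also have "\<dots> \<le> emeasure N (\<psi> -` G \<inter> C)" by (rule SUP_least) (rule Wle)
      also have "\<dots> = emeasure A G" using eA[of G] G by simp
      finally show ?thesis .
    qed
    have "A = lam" by (rule finite_measure_eq_open_le[OF fA fl sA sl tot ge])
    then show ?thesis using \<psi>meas eA by (intro bexI[of _ \<psi>]) auto
  qed
qed

lemma realize_family:
  fixes lam :: "nat \<Rightarrow> 'a::polish_space measure" and N :: "'b measure"
  assumes fm: "finite_measure N" and na: "nonatomic N"
    and C: "\<And>i. i \<le> n \<Longrightarrow> C i \<in> sets N"
    and disj: "\<And>i j. i \<le> n \<Longrightarrow> j \<le> n \<Longrightarrow> i \<noteq> j \<Longrightarrow> C i \<inter> C j = {}"
    and cov: "(\<Union>i\<le>n. C i) = space N"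
    and fl: "\<And>i. i \<le> n \<Longrightarrow> finite_measure (lam i)"
    and sl: "\<And>i. i \<le> n \<Longrightarrow> sets (lam i) = sets borel"
    and eqm: "\<And>i. i \<le> n \<Longrightarrow> emeasure (lam i) UNIV = emeasure N (C i)"
  shows "\<exists>\<psi>\<in>borel_measurable N. \<forall>i\<le>n. \<forall>E\<in>sets borel. emeasure N (\<psi> -` E \<inter> C i) = emeasure (lam i) E"
proof -
  have "\<forall>i. \<exists>\<psi>. i \<le> n \<longrightarrow> \<psi> \<in> borel_measurable N \<and> (\<forall>E\<in>sets borel. emeasure N (\<psi> -` E \<inter> C i) = emeasure (lam i) E)"
  proof
    fix i
    show "\<exists>\<psi>. i \<le> n \<longrightarrow> \<psi> \<in> borel_measurable N \<and> (\<forall>E\<in>sets borel. emeasure N (\<psi> -` E \<inter> C i) = emeasure (lam i) E)"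
    proof (cases "i \<le> n")
      case True
      from realize[OF fm na C[OF True] fl[OF True] sl[OF True] eqm[OF True]]
      obtain \<psi>0 where \<psi>0: "\<psi>0 \<in> borel_measurable N" "\<forall>E\<in>sets borel. emeasure N (\<psi>0 -` E \<inter> C i) = emeasure (lam i) E"
        by (elim bexE)
      show ?thesis using \<psi>0 by (intro exI[of _ \<psi>0]) simp
    qed simp
  qed
  from choice[OF this] obtain \<Psi> where \<Psi>': "\<forall>i. i \<le> n \<longrightarrow> \<Psi> i \<in> borel_measurable N \<and> (\<forall>E\<in>sets borel. emeasure N (\<Psi> i -` E \<inter> C i) = emeasure (lam i) E)"
    by (elim exE)
  have \<Psi>: "\<Psi> i \<in> borel_measurable N \<and> (\<forall>E\<in>sets borel. emeasure N (\<Psi> i -` E \<inter> C i) = emeasure (lam i) E)" if "i \<le> n" for i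
    using \<Psi>' that by blast
  define idx where "idx p = (LEAST i. p \<in> C i)" for p
  have idx: "idx p = i" if "i \<le> n" "p \<in> C i" for p i
  proof -
    have "p \<in> C (idx p)" unfolding idx_def using that(2) by (rule LeastI)
    moreover have "idx p \<le> i" unfolding idx_def using that(2) by (rule Least_le)
    ultimately show ?thesis
    proof (rule_tac ccontr)
      assume pin: "p \<in> C (idx p)" and le: "idx p \<le> i" and ne: "idx p \<noteq> i"
      have "C (idx p) \<inter> C i = {}" using disj[of "idx p" i] le that(1) ne by simp
      then show False using pin that(2) by blast
    qed
  qed
  define \<psi> where "\<psi> p = \<Psi> (idx p) p" for p
  have pre: "\<psi> -` E \<inter> C i = \<Psi> i -` E \<inter> C i" if "i \<le> n" for i E
  proof -
    have eq: "\<psi> p = \<Psi> i p" if "p \<in> C i" for p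
    proof -
      have "idx p = i" using idx[OF \<open>i \<le> n\<close> that] .
      then show ?thesis unfolding \<psi>_def by simp
    qed
    show ?thesis
    proof (intro equalityI subsetI)
      fix p assume "p \<in> \<psi> -` E \<inter> C i"
      then show "p \<in> \<Psi> i -` E \<inter> C i" using eq[of p] by simp
    next
      fix p assume "p \<in> \<Psi> i -` E \<inter> C i"
      then show "p \<in> \<psi> -` E \<inter> C i" using eq[of p] by simp
    qed
  qed
  have meas: "\<psi> \<in> borel_measurable N"
  proof (rule borel_measurableI)
    fix S :: "'a set" assume "open S"
    have Csp: "C i \<subseteq> space N" if "i \<le> n" for i using C[OF that] by (rule sets.sets_into_space)
    have "\<psi> -` S \<inter> space N = (\<Union>i\<le>n. \<psi> -` S \<inter> C i)" unfolding cov[symmetric] by blast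
    also have "\<dots> = (\<Union>i\<le>n. \<Psi> i -` S \<inter> C i)" using pre by simp
    also have "\<dots> = (\<Union>i\<le>n. (\<Psi> i -` S \<inter> space N) \<inter> C i)"
    proof (intro SUP_cong refl)
      fix i assume "i \<in> {..n}"
      then show "\<Psi> i -` S \<inter> C i = (\<Psi> i -` S \<inter> space N) \<inter> C i" using Csp[of i] by auto
    qed
    also have "\<dots> \<in> sets N"
    proof (intro sets.finite_UN ballI)
      fix i assume "i \<in> {..n}"
      then have i: "i \<le> n" by simp
      have "\<Psi> i -` S \<inter> space N \<in> sets N"
        using \<Psi>[OF i] \<open>open S\<close> by (intro measurable_sets[of _ N borel]) auto
      then show "(\<Psi> i -` S \<inter> space N) \<inter> C i \<in> sets N" using C[OF i] by (rule sets.Int)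
    qed simp
    finally show "\<psi> -` S \<inter> space N \<in> sets N" .
  qed
  show ?thesis
  proof (intro bexI[of _ \<psi>] allI impI ballI)
    fix i and E :: "'a set" assume i: "i \<le> n" and E: "E \<in> sets borel"
    show "emeasure N (\<psi> -` E \<inter> C i) = emeasure (lam i) E" using pre[OF i] \<Psi>[OF i] E by simp
  qed (rule meas)
qed

lemma inner_approx:
  fixes \<mu> :: "'a::polish_space measure"
  assumes fm: "finite_measure \<mu>" and s: "sets \<mu> = sets borel" and B: "B \<in> sets borel" and a: "a > 0"
  shows "\<exists>K. K \<subseteq> B \<and> compact K \<and> measure \<mu> B \<le> measure \<mu> K + a"
proof (cases "measure \<mu> B - a \<le> 0")
  case True
  then show ?thesis by (intro exI[of _ "{}"]) auto
next
  case False
  interpret finite_measure \<mu> by (rule fm)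
  have sp: "space \<mu> = UNIV" using sets_eq_imp_space_eq[OF s] by simp
  have "emeasure \<mu> B = (SUP K \<in> {K. K \<subseteq> B \<and> compact K}. emeasure \<mu> K)"
    using inner_regular[OF s _ B] sp emeasure_finite by simp
  moreover have "ennreal (measure \<mu> B - a) < emeasure \<mu> B"
    using False a by (simp add: emeasure_eq_measure ennreal_lessI)
  ultimately obtain K where K: "K \<subseteq> B" "compact K" "ennreal (measure \<mu> B - a) < emeasure \<mu> K"
    by (auto simp: less_SUP_iff)
  then have "measure \<mu> B - a < measure \<mu> K"
    using False by (simp add: emeasure_eq_measure ennreal_less_iff)
  then show ?thesis using K by (intro exI[of _ K]) auto
qed

lemma sep_compact:
  fixes S T :: "'a::metric_space set"
  assumes S: "compact S" and T: "compact T" and dj: "S \<inter> T = {}"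
  shows "\<exists>d>0. \<forall>x\<in>S. \<forall>y\<in>T. d \<le> dist x y"
proof (cases "S = {} \<or> T = {}")
  case True
  then show ?thesis by (intro exI[of _ 1]) auto
next
  case False
  then have Sne: "S \<noteq> {}" and Tne: "T \<noteq> {}" by auto
  have Tc: "closed T" using T by (rule compact_imp_closed)
  obtain x0 where x0: "x0 \<in> S" "\<forall>y\<in>S. infdist x0 T \<le> infdist y T"
    using continuous_attains_inf[OF S Sne continuous_on_infdist[OF continuous_on_id]] by auto
  have "x0 \<notin> T" using x0 dj by auto
  then have pos: "infdist x0 T > 0"
    using in_closed_iff_infdist_zero[OF Tc Tne, of x0] infdist_nonneg[of x0 T] by linarith
  show ?thesis
  proof (intro exI[of _ "infdist x0 T"] conjI pos ballI)
    fix x y assume "x \<in> S" "y \<in> T"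
    then show "infdist x0 T \<le> dist x y" using x0(2) infdist_le[of y T x] by force
  qed
qed

lemma infdist_lessE:
  assumes "A \<noteq> {}" "infdist x A < g"
  obtains y where "y \<in> A" "dist x y < g"
proof -
  have "Inf (dist x ` A) < g" using assms by (simp add: infdist_notempty)
  then obtain z where "z \<in> dist x ` A" "z < g" using cInf_lessD[of "dist x ` A" g] assms(1) by blast
  then show ?thesis using that by blast
qed

lemma finite_pos_min:
  assumes "finite I" "\<And>i. i \<in> I \<Longrightarrow> f i > (0::real)" "a > 0"
  shows "\<exists>g>0. g \<le> a \<and> (\<forall>i\<in>I. g \<le> f i)"
proof -
  define g where "g = Min (insert a (f ` I))"
  have "0 < g" unfolding g_def using assms by (subst Min_gr_iff) auto
  moreover have "g \<le> a" unfolding g_def by (rule Min_le) (use assms(1) in auto)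
  moreover have "\<forall>i\<in>I. g \<le> f i" unfolding g_def using assms(1) by (intro ballI Min_le) auto
  ultimately show ?thesis by blast
qed

lemma volbar_facts:
  assumes fM: "finite_measure M" and naM: "nonatomic M" and pos: "emeasure M (space M) \<noteq> 0"
  shows "prob_space (volbar M)" "nonatomic (volbar M)" "sets (volbar M) = sets M" "space (volbar M) = space M"
proof -
  interpret FM: finite_measure M by (rule fM)
  define vM where "vM = measure M (space M)"
  have vMpos: "vM > 0" using pos FM.emeasure_eq_measure[of "space M"] measure_nonneg[of M "space M"]
    by (auto simp: vM_def less_le)
  have V: "volbar M = scale_measure (ennreal (1 / vM)) M" by (simp add: volbar_def vM_def)
  show sV: "sets (volbar M) = sets M" by (simp add: V)
  show spV: "space (volbar M) = space M" by (simp add: V space_scale_measure)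
  have mV: "measure (volbar M) A = (1 / vM) * measure M A" for A
    unfolding V using vMpos by (simp add: measure_scale_measure)
  have eV: "emeasure (volbar M) A = ennreal ((1 / vM) * measure M A)" for A
  proof -
    have "ennreal (1 / vM) * ennreal (measure M A) = ennreal ((1 / vM) * measure M A)"
      by (rule ennreal_mult[symmetric]) (use vMpos in auto)
    then show ?thesis unfolding V by (simp add: FM.emeasure_eq_measure)
  qed
  show "prob_space (volbar M)"
  proof (rule prob_spaceI)
    show "emeasure (volbar M) (space (volbar M)) = 1" using vMpos by (simp add: spV eV vM_def)
  qed
  show "nonatomic (volbar M)"
    unfolding nonatomic_def
  proof (intro ballI impI)
    fix A assume A: "A \<in> sets (volbar M)" and Ap: "0 < emeasure (volbar M) A"
    have "0 < measure M A" using Ap vMpos by (simp add: eV ennreal_less_iff zero_less_divide_iff)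
    then have "0 < emeasure M A" by (simp add: FM.emeasure_eq_measure)
    then obtain B where B: "B \<in> sets M" "B \<subseteq> A" "0 < emeasure M B" "emeasure M B < emeasure M A"
      using naM A sV unfolding nonatomic_def by blast
    have B': "0 < measure M B" "measure M B < measure M A"
      using B by (simp_all add: FM.emeasure_eq_measure ennreal_less_iff)
    have "0 < emeasure (volbar M) B" using B' vMpos by (simp add: eV)
    moreover have "emeasure (volbar M) B < emeasure (volbar M) A"
      using B' vMpos by (simp add: eV ennreal_less_iff divide_strict_right_mono)
    ultimately show "\<exists>B\<in>sets (volbar M). B \<subseteq> A \<and> 0 < emeasure (volbar M) B \<and> emeasure (volbar M) B < emeasure (volbar M) A"
      using B sV by blast
  qed
qed

lemma open_O:
  fixes f :: "nat \<Rightarrow> 'a::topological_space \<Rightarrow> real"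
  assumes fc: "\<And>j. continuous_on UNIV (f j)" and fb: "\<And>j. bounded (range (f j))"
  shows "openin weak_star_topology (Prob \<inter> (\<Inter>j<n. {\<nu>\<in>Prob. (\<integral>x. f j x \<partial>\<nu>) \<in> {c j<..}}))"
proof -
  define S where "S = {{N \<in> (Prob :: 'a measure set). (\<integral>x. g x \<partial>N) \<in> U} | g U.
        continuous_on UNIV (g :: 'a \<Rightarrow> real) \<and> bounded (range g) \<and> open U}"
  have P: "Prob \<in> S"
  proof -
    have "Prob = {N \<in> (Prob :: 'a measure set). (\<integral>x. (\<lambda>_. 0::real) x \<partial>N) \<in> UNIV}" by simp
    moreover have "continuous_on UNIV (\<lambda>_::'a. 0::real)" "bounded (range (\<lambda>_::'a. 0::real))" "open (UNIV :: real set)"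
      by auto
    ultimately show ?thesis unfolding S_def by blast
  qed
  have Vj: "{\<nu>\<in>Prob. (\<integral>x. f j x \<partial>\<nu>) \<in> {c j<..}} \<in> S" for j
    unfolding S_def using fc[of j] fb[of j] by (intro CollectI exI[of _ "f j"] exI[of _ "{c j<..}"]) auto
  have "generate_topology_on S (Prob \<inter> (\<Inter>j<m. {\<nu>\<in>Prob. (\<integral>x. f j x \<partial>\<nu>) \<in> {c j<..}}))" for m
  proof (induction m)
    case 0
    then show ?case using P by (simp add: generate_topology_on.Basis)
  next
    case (Suc m)
    have "Prob \<inter> (\<Inter>j<Suc m. {\<nu>\<in>Prob. (\<integral>x. f j x \<partial>\<nu>) \<in> {c j<..}}) =
          (Prob \<inter> (\<Inter>j<m. {\<nu>\<in>Prob. (\<integral>x. f j x \<partial>\<nu>) \<in> {c j<..}})) \<inter> {\<nu>\<in>Prob. (\<integral>x. f m x \<partial>\<nu>) \<in> {c m<..}}"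
      by (auto simp: lessThan_Suc)
    then show ?case using Suc Vj[of m] by (simp add: generate_topology_on.Int generate_topology_on.Basis)
  qed
  then show ?thesis unfolding weak_star_topology_def S_def openin_topology_generated_by_iff by simp
qed

theorem lemma6p9:
  fixes \<mu> :: "'a::polish_space measure" and \<rho> :: "'a \<Rightarrow> 'a \<Rightarrow> real"
    and M :: "'b measure" and \<epsilon> :: real
  assumes "\<mu> \<in> Prob"
    and "is_metric \<rho>" and "one_bounded \<rho>" and "unif_cont_metric \<rho>"
    and "finite_measure M" and "nonatomic M" and "emeasure M (space M) \<noteq> 0"
    and "\<epsilon> > 0"
  shows "\<exists>\<O>. openin weak_star_topology \<O> \<and> \<mu> \<in> \<O> \<and>
           (\<forall>\<phi> \<in> M \<rightarrow>\<^sub>M borel. distr (volbar M) borel \<phi> \<in> \<O> \<longrightarrow>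
              (\<exists>\<psi> \<in> M \<rightarrow>\<^sub>M borel. rhoM \<rho> M \<phi> \<psi> < \<epsilon> \<and> distr (volbar M) borel \<psi> = \<mu>))"
proof -
  note \<mu>P = assms(1) and ob = assms(3) and uc = assms(4) and fM = assms(5) and naM = assms(6)
    and posM = assms(7) and \<epsilon>pos = assms(8)
  define N where "N = volbar M"
  have pN: "prob_space N" and naN: "nonatomic N" and sN: "sets N = sets M" and spN: "space N = space M"
    using volbar_facts[OF fM naM posM] by (simp_all add: N_def)
  interpret PN: prob_space N by (rule pN)
  have fN: "finite_measure N" by (rule PN.finite_measure_axioms)
  have measN: "measurable N borel = measurable M borel" by (rule measurable_cong_sets[OF sN refl])
  have s\<mu>: "sets \<mu> = sets borel" and p\<mu>: "prob_space \<mu>" using \<mu>P by (auto simp: Prob_def)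
  interpret P\<mu>: prob_space \<mu> by (rule p\<mu>)
  have sp\<mu>: "space \<mu> = UNIV" using sets_eq_imp_space_eq[OF s\<mu>] by simp
  have \<rho>1: "\<rho> x y \<le> 1" for x y using ob by (simp add: one_bounded_def)
  obtain \<delta> where \<delta>: "\<delta> > 0" "\<And>x y. dist x y < \<delta> \<Longrightarrow> \<rho> x y < \<epsilon> / 2"
    using uc \<epsilon>pos unfolding unif_cont_metric_def by (metis half_gt_zero)
  obtain s :: "nat \<Rightarrow> 'a" where ds: "dense_seq s" using dense_seq_exists by blast
  obtain k where k: "rr k < \<delta> / 4" using rr_small[of "\<delta>/4"] \<delta> by auto
  define D where "D j = Dset s k j" for j
  have Ds: "D j \<in> sets borel" for j by (simp add: D_def Dset_borel)
  have Ddisj: "i \<noteq> j \<Longrightarrow> D i \<inter> D j = {}" for i j by (simp add: D_def Dset_disj)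
  have Dball: "D j \<subseteq> ball (s j) (rr k)" for j by (simp add: D_def Dset_ball)
  have "(\<lambda>m. measure \<mu> (\<Union>j<m. D j)) \<longlonglongrightarrow> measure \<mu> (\<Union>m. \<Union>j<m. D j)"
  proof (rule P\<mu>.finite_Lim_measure_incseq)
    show "range (\<lambda>m. \<Union>j<m. D j) \<subseteq> sets \<mu>" using Ds s\<mu> by auto
    show "incseq (\<lambda>m. \<Union>j<m. D j)" by (rule incseq_SucI) (auto simp: lessThan_Suc)
  qed
  moreover have "(\<Union>m. \<Union>j<m. D j) = UNIV"
  proof -
    have "x \<in> (\<Union>m. \<Union>j<m. D j)" for x
    proof -
      obtain j where "x \<in> D j" using Dset_cover[OF ds] by (auto simp: D_def)
      then show ?thesis by (intro UN_I[of "Suc j"] UN_I[of j]) auto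
    qed
    then show ?thesis by blast
  qed
  ultimately have "(\<lambda>m. measure \<mu> (\<Union>j<m. D j)) \<longlonglongrightarrow> 1" using P\<mu>.prob_space sp\<mu> by simp
  moreover have "1 - \<epsilon> / 12 < (1::real)" using \<epsilon>pos by simp
  ultimately have "eventually (\<lambda>m. 1 - \<epsilon> / 12 < measure \<mu> (\<Union>j<m. D j)) sequentially"
    by (rule order_tendstoD(1))
  then obtain n where n: "1 - \<epsilon> / 12 < measure \<mu> (\<Union>j<n. D j)"
    by (auto simp: eventually_sequentially)
  define a where "a = \<epsilon> / (12 * real (Suc n))"
  have apos: "a > 0" using \<epsilon>pos by (simp add: a_def)
  have na: "real n * a \<le> \<epsilon> / 12"
  proof -
    have "real n * a = (\<epsilon> / 12) * (real n / real (Suc n))" by (simp add: a_def field_simps)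
    also have "\<dots> \<le> (\<epsilon> / 12) * 1" using \<epsilon>pos by (intro mult_left_mono) auto
    finally show ?thesis by simp
  qed
  have "\<forall>j. \<exists>K. K \<subseteq> D j \<and> compact K \<and> measure \<mu> (D j) \<le> measure \<mu> K + a"
    using inner_approx[OF P\<mu>.finite_measure_axioms s\<mu> Ds apos] by blast
  then obtain F where F: "\<And>j. F j \<subseteq> D j" "\<And>j. compact (F j)" "\<And>j. measure \<mu> (D j) \<le> measure \<mu> (F j) + a"
    by metis
  have Fc: "closed (F j)" for j using F(2) by (rule compact_imp_closed)
  have Fs: "F j \<in> sets borel" for j using Fc by (rule borel_closed)
  have Fdisj: "i \<noteq> j \<Longrightarrow> F i \<inter> F j = {}" for i j using F(1) Ddisj by blast
  define I where "I = {(i, j). i < n \<and> j < n \<and> i \<noteq> j}"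
  have finI: "finite I" by (rule finite_subset[of _ "{..<n} \<times> {..<n}"]) (auto simp: I_def)
  have "\<forall>p. \<exists>d. p \<in> I \<longrightarrow> d > 0 \<and> (\<forall>x\<in>F (fst p). \<forall>y\<in>F (snd p). d \<le> dist x y)"
  proof
    fix p :: "nat \<times> nat"
    show "\<exists>d. p \<in> I \<longrightarrow> d > 0 \<and> (\<forall>x\<in>F (fst p). \<forall>y\<in>F (snd p). d \<le> dist x y)"
    proof (cases "p \<in> I")
      case True
      then have "fst p \<noteq> snd p" by (auto simp: I_def)
      then have "F (fst p) \<inter> F (snd p) = {}" by (rule Fdisj)
      then show ?thesis using sep_compact[OF F(2) F(2)] by blast
    qed simp
  qed
  then obtain sd where sd: "\<And>p. p \<in> I \<Longrightarrow> sd p > 0 \<and> (\<forall>x\<in>F (fst p). \<forall>y\<in>F (snd p). sd p \<le> dist x y)"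
    by metis
  obtain g where g: "g > 0" "g \<le> \<delta> / 2" "\<And>p. p \<in> I \<Longrightarrow> g \<le> sd p"
    using finite_pos_min[OF finI, of sd "\<delta>/2"] sd \<delta> by auto
  define \<gamma> where "\<gamma> = g / 2"
  have \<gamma>pos: "\<gamma> > 0" and \<gamma>\<delta>: "\<gamma> \<le> \<delta> / 4" using g by (auto simp: \<gamma>_def)
  have sepF: "2 * \<gamma> \<le> dist x y" if "i < n" "j < n" "i \<noteq> j" "x \<in> F i" "y \<in> F j" for i j x y
  proof -
    have "(i, j) \<in> I" using that by (simp add: I_def)
    then have "sd (i, j) \<le> dist x y" "g \<le> sd (i, j)" using sd[of "(i, j)"] g(3)[of "(i, j)"] that by auto
    then show ?thesis by (simp add: \<gamma>_def)
  qed
  define U where "U j = (if F j = {} then {} else {x. infdist x (F j) < \<gamma>})" for j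
  have Uo: "open (U j)" for j
    unfolding U_def by (auto intro!: open_Collect_less continuous_on_infdist continuous_on_id continuous_on_const)
  have Us: "U j \<in> sets borel" for j using Uo by (rule borel_open)
  have Unear: "\<exists>y\<in>F j. dist x y < \<gamma>" if "x \<in> U j" for x j
  proof -
    have "F j \<noteq> {}" "infdist x (F j) < \<gamma>" using that by (auto simp: U_def split: if_splits)
    then show ?thesis by (metis infdist_lessE)
  qed
  have Udisj: "U i \<inter> U j = {}" if "i < n" "j < n" "i \<noteq> j" for i j
  proof (rule ccontr)
    assume "U i \<inter> U j \<noteq> {}"
    then obtain x where "x \<in> U i" "x \<in> U j" by blast
    then obtain y y' where "y \<in> F i" "dist x y < \<gamma>" "y' \<in> F j" "dist x y' < \<gamma>" using Unear by metis
    moreover have "dist y y' \<le> dist x y + dist x y'" by (metis dist_commute dist_triangle)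
    ultimately show False using sepF[OF that] by fastforce
  qed
  define f where "f j x = max 0 (1 - infdist x (F j) / \<gamma>)" for j x
  have fc: "continuous_on UNIV (f j)" for j
    unfolding f_def by (intro continuous_intros) (use \<gamma>pos in auto)
  have f01: "0 \<le> f j x" "f j x \<le> 1" for j x
    using infdist_nonneg[of x "F j"] \<gamma>pos by (auto simp: f_def)
  have fb: "bounded (range (f j))" for j
    by (rule bounded_subset[of "{0..1}"]) (use f01 in auto)
  have fU: "f j x \<le> indicator (U j) x" if "F j \<noteq> {}" for j x
  proof (cases "infdist x (F j) < \<gamma>")
    case True
    then show ?thesis using that f01 by (simp add: U_def)
  next
    case False
    then have "1 - infdist x (F j) / \<gamma> \<le> 0" using \<gamma>pos by (simp add: field_simps)
    then show ?thesis by (simp add: f_def)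
  qed
  have fF: "indicator (F j) x \<le> f j x" for j x
    using f01 by (cases "x \<in> F j") (auto simp: f_def)
  have fm: "f j \<in> borel_measurable borel" for j by (rule borel_measurable_continuous_onI[OF fc])
  define c0 where "c0 j = (\<integral>x. f j x \<partial>\<mu>) - a" for j
  define \<O> where "\<O> = Prob \<inter> (\<Inter>j<n. {\<nu>\<in>Prob. (\<integral>x. f j x \<partial>\<nu>) \<in> {c0 j<..}})"
  show ?thesis
  proof (intro exI[of _ \<O>] conjI)
    show "openin weak_star_topology \<O>" unfolding \<O>_def by (rule open_O[OF fc fb])
    show "\<mu> \<in> \<O>" unfolding \<O>_def using \<mu>P apos by (auto simp: c0_def)
    show "\<forall>\<phi>\<in>M \<rightarrow>\<^sub>M borel. distr (volbar M) borel \<phi> \<in> \<O> \<longrightarrow>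
        (\<exists>\<psi>\<in>M \<rightarrow>\<^sub>M borel. rhoM \<rho> M \<phi> \<psi> < \<epsilon> \<and> distr (volbar M) borel \<psi> = \<mu>)"
    proof (intro ballI impI)
      fix \<phi> assume \<phi>: "\<phi> \<in> M \<rightarrow>\<^sub>M borel" and inO: "distr (volbar M) borel \<phi> \<in> \<O>"
      show "\<exists>\<psi>\<in>M \<rightarrow>\<^sub>M borel. rhoM \<rho> M \<phi> \<psi> < \<epsilon> \<and> distr (volbar M) borel \<psi> = \<mu>"
      proof -
      have \<phi>N: "\<phi> \<in> borel_measurable N" unfolding measN by (rule \<phi>)
      define \<nu> where "\<nu> = distr N borel \<phi>"
      have \<nu>O: "\<nu> \<in> \<O>" using inO by (simp add: \<nu>_def N_def)
      have \<nu>P: "\<nu> \<in> Prob" using \<nu>O by (simp add: \<O>_def)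
      have \<nu>f: "c0 j < (\<integral>x. f j x \<partial>\<nu>)" if "j < n" for j using \<nu>O that by (auto simp: \<O>_def)
      interpret P\<nu>: prob_space \<nu> using \<nu>P by (simp add: Prob_def)
      have s\<nu>: "sets \<nu> = sets borel" by (simp add: \<nu>_def)
      have sp\<nu>: "space \<nu> = UNIV" by (simp add: \<nu>_def)
      define B where "B j = \<phi> -` U j \<inter> space N" for j
      have Bs: "B j \<in> sets N" for j unfolding B_def using \<phi>N Us by (rule measurable_sets)
      have Bdisj: "B i \<inter> B j = {}" if "i < n" "j < n" "i \<noteq> j" for i j
        using Udisj[OF that] by (auto simp: B_def)
      have mB: "measure N (B j) = measure \<nu> (U j)" for j
        unfolding \<nu>_def B_def using \<phi>N Us by (simp add: measure_distr)
      have fint: "integrable \<mu> (f j)" for j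
        using f01 by (intro P\<mu>.integrable_const_bound[of _ 1]) (auto simp: measurable_cong_sets[OF s\<mu> refl] fm)
      have Blow: "measure \<mu> (F j) - a \<le> measure N (B j)" if "j < n" for j
      proof (cases "F j = {}")
        case True
        have "measure \<mu> (F j) = 0" using True by simp
        then show ?thesis using apos measure_nonneg[of N "B j"] by linarith
      next
        case False
        have "(\<integral>x. f j x \<partial>\<nu>) \<le> (\<integral>x. indicator (U j) x \<partial>\<nu>)"
        proof (rule integral_mono')
          show "integrable \<nu> (indicator (U j) :: 'a \<Rightarrow> real)"
            using Us s\<nu> sp\<nu> by (simp add: integrable_indicator_iff P\<nu>.emeasure_finite top.not_eq_extremum[symmetric])
        qed (use fU[OF False] in auto)
        also have "\<dots> = measure \<nu> (U j)" using sp\<nu> by simp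
        finally have 1: "(\<integral>x. f j x \<partial>\<nu>) \<le> measure \<nu> (U j)" .
        have "measure \<mu> (F j) = (\<integral>x. indicator (F j) x \<partial>\<mu>)" using sp\<mu> by simp
        also have "\<dots> \<le> (\<integral>x. f j x \<partial>\<mu>)"
          by (rule integral_mono') (use fint fF f01 in auto)
        finally have 2: "measure \<mu> (F j) \<le> (\<integral>x. f j x \<partial>\<mu>)" .
        show ?thesis using 1 2 \<nu>f[OF that] mB[of j] by (simp add: c0_def)
      qed
      define c where "c j = min (measure N (B j)) (measure \<mu> (F j))" for j
      have c0': "0 \<le> c j" for j by (simp add: c_def)
      have cB: "c j \<le> measure N (B j)" and cF: "c j \<le> measure \<mu> (F j)" for j by (simp_all add: c_def)
      have clow: "measure \<mu> (F j) - a \<le> c j" if "j < n" for j using Blow[OF that] apos by (simp add: c_def)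
      have "\<forall>j. \<exists>CC. j < n \<longrightarrow> CC \<in> sets N \<and> CC \<subseteq> B j \<and> measure N CC = c j"
      proof
        fix j
        obtain CC where "CC \<in> sets N" "CC \<subseteq> B j" "measure N CC = c j"
          using sierpinski[OF fN naN Bs c0' cB] by blast
        then show "\<exists>CC. j < n \<longrightarrow> CC \<in> sets N \<and> CC \<subseteq> B j \<and> measure N CC = c j" by blast
      qed
      then obtain CC where CC: "\<And>j. j < n \<Longrightarrow> CC j \<in> sets N \<and> CC j \<subseteq> B j \<and> measure N (CC j) = c j"
        by metis
      define C where "C j = (if j < n then CC j else space N - (\<Union>i<n. CC i))" for j
      have CCsp: "CC j \<subseteq> space N" if "j < n" for j using CC[OF that] B_def by auto
      have Cs: "C j \<in> sets N" for j
        using CC by (auto simp: C_def intro!: sets.Diff sets.finite_UN)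
      have Cdisj: "C i \<inter> C j = {}" if "i \<le> n" "j \<le> n" "i \<noteq> j" for i j
      proof (cases "i < n \<and> j < n")
        case True
        then have "CC i \<subseteq> B i" "CC j \<subseteq> B j" using CC by auto
        then show ?thesis using Bdisj[of i j] that True by (auto simp: C_def)
      next
        case False
        then show ?thesis using that by (auto simp: C_def)
      qed
      have Ccov: "(\<Union>i\<le>n. C i) = space N"
      proof (intro equalityI subsetI)
        fix p assume "p \<in> (\<Union>i\<le>n. C i)"
        then show "p \<in> space N" using CCsp by (auto simp: C_def split: if_splits)
      next
        fix p assume p: "p \<in> space N"
        show "p \<in> (\<Union>i\<le>n. C i)"
        proof (cases "\<exists>i<n. p \<in> CC i")
          case True
          then obtain i where "i < n" "p \<in> CC i" by blast
          then show ?thesis by (auto simp: C_def intro!: bexI[of _ i])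
        next
          case False
          then show ?thesis using p by (auto simp: C_def intro!: bexI[of _ n])
        qed
      qed
      have mC: "measure N (C j) = c j" if "j < n" for j using CC[OF that] that by (simp add: C_def)
      have mCn: "measure N (C n) = 1 - (\<Sum>j<n. c j)"
      proof -
        have "measure N (\<Union>i<n. CC i) = (\<Sum>i<n. measure N (CC i))"
        proof (rule measure_finite_Union)
          show "disjoint_family_on CC {..<n}"
            unfolding disjoint_family_on_def using CC Bdisj by blast
        qed (use CC in \<open>auto simp: PN.emeasure_finite\<close>)
        then have "measure N (\<Union>i<n. CC i) = (\<Sum>j<n. c j)" using CC by simp
        moreover have "measure N (space N - (\<Union>i<n. CC i)) = 1 - measure N (\<Union>i<n. CC i)"
          using CC by (intro PN.prob_compl) (auto intro!: sets.finite_UN)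
        ultimately show ?thesis by (simp add: C_def)
      qed
      define w where "w j = c j / measure \<mu> (F j)" for j
      have w01: "0 \<le> w j" "w j \<le> 1" for j
        using c0' cF measure_nonneg[of \<mu> "F j"] by (auto simp: w_def divide_le_eq_1 less_le)
      have wc: "w j * measure \<mu> (F j) = c j" for j
      proof (cases "measure \<mu> (F j) = 0")
        case True
        then show ?thesis using c0'[of j] cF[of j] by (simp add: w_def)
      qed (simp add: w_def)
      define h where "h x = (\<Sum>i<n. w i * indicator (F i) x)" for x
      have h01: "0 \<le> h x" "h x \<le> 1" for x
      proof -
        show "0 \<le> h x" unfolding h_def using w01 by (intro sum_nonneg) auto
        have "h x \<le> (\<Sum>i<n. indicator (F i) x)"
          unfolding h_def using w01 by (intro sum_mono) (auto simp: indicator_def)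
        also have "\<dots> = indicator (\<Union>i<n. F i) x"
          by (rule indicator_UN_disjoint[symmetric]) (auto simp: disjoint_family_on_def Fdisj)
        also have "\<dots> \<le> 1" by (simp add: indicator_def)
        finally show "h x \<le> 1" .
      qed
      define gr where "gr j x = (if j < n then w j * indicator (F j) x else 1 - h x)" for j x
      have gr01: "0 \<le> gr j x" "gr j x \<le> 1" for j x
        using w01[of j] h01[of x] by (auto simp: gr_def indicator_def)
      have grsum: "(\<Sum>i\<le>n. gr i x) = 1" for x
      proof -
        have "(\<Sum>i\<le>n. gr i x) = (\<Sum>i<n. gr i x) + gr n x"
          by (simp add: lessThan_Suc_atMost[symmetric])
        also have "(\<Sum>i<n. gr i x) = h x" unfolding h_def gr_def by simp
        finally show ?thesis by (simp add: gr_def)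
      qed
      have grm: "gr j \<in> borel_measurable borel" for j
        unfolding gr_def h_def using Fs by measurable
      have grm\<mu>: "gr j \<in> borel_measurable \<mu>" for j
        using grm by (simp add: measurable_cong_sets[OF s\<mu> refl])
      have grint: "integrable \<mu> (gr j)" for j
        using gr01 grm\<mu> by (intro P\<mu>.integrable_const_bound[of _ 1]) auto
      have grI: "(\<integral>x. gr j x \<partial>\<mu>) = (if j < n then c j else 1 - (\<Sum>i<n. c i))" for j
      proof (cases "j < n")
        case True
        then have "(\<integral>x. gr j x \<partial>\<mu>) = (\<integral>x. w j * indicator (F j) x \<partial>\<mu>)" by (simp add: gr_def)
        also have "\<dots> = w j * measure \<mu> (F j)" using sp\<mu> by simp
        finally show ?thesis using wc True by simp
      next
        case False
        have hi: "integrable \<mu> (\<lambda>x. w i * indicator (F i) x)" for i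
          using Fs s\<mu> sp\<mu> by (intro integrable_mult_right) (simp add: integrable_indicator_iff P\<mu>.emeasure_finite top.not_eq_extremum[symmetric])
        have g1: "(\<integral>x. gr j x \<partial>\<mu>) = (\<integral>x. 1 - h x \<partial>\<mu>)" using False by (simp add: gr_def)
        have hint: "integrable \<mu> h" unfolding h_def by (rule Bochner_Integration.integrable_sum[where I="{..<n}" and f="\<lambda>i x. w i * indicator (F i) x"]) (rule hi)
        have g2: "(\<integral>x. 1 - h x \<partial>\<mu>) = (\<integral>x. 1 \<partial>\<mu>) - (\<integral>x. h x \<partial>\<mu>)"
          by (rule Bochner_Integration.integral_diff) (auto intro: hint)
        have g3: "(\<integral>x. 1 \<partial>\<mu>) = (1::real)" using P\<mu>.prob_space by simp
        have g4: "(\<integral>x. h x \<partial>\<mu>) = (\<Sum>i<n. w i * measure \<mu> (F i))"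
          unfolding h_def using hi sp\<mu> by (subst Bochner_Integration.integral_sum) auto
        show ?thesis using g1 g2 g3 g4 False wc by simp
      qed
      define lam where "lam j = density \<mu> (\<lambda>x. ennreal (gr j x))" for j
      have slam: "sets (lam j) = sets borel" for j by (simp add: lam_def s\<mu>)
      have splam: "space (lam j) = UNIV" for j by (simp add: lam_def sp\<mu>)
      have elam: "emeasure (lam j) E = (\<integral>\<^sup>+x. ennreal (gr j x) * indicator E x \<partial>\<mu>)"
        if "E \<in> sets borel" for j E
        unfolding lam_def using that grm\<mu> s\<mu> by (intro emeasure_density) auto
      have masslam: "emeasure (lam j) UNIV = ennreal (\<integral>x. gr j x \<partial>\<mu>)" for j
      proof -
        have "emeasure (lam j) UNIV = (\<integral>\<^sup>+x. ennreal (gr j x) \<partial>\<mu>)" using elam[of UNIV j] by simp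
        also have "\<dots> = ennreal (\<integral>x. gr j x \<partial>\<mu>)"
          using grint gr01 by (intro nn_integral_eq_integral) auto
        finally show ?thesis .
      qed
      have flam: "finite_measure (lam j)" for j
        by (rule finite_measureI) (simp add: splam masslam)
      have eqm: "emeasure (lam j) UNIV = emeasure N (C j)" if "j \<le> n" for j
      proof (cases "j < n")
        case True
        then show ?thesis using mC[OF True] grI[of j] by (simp add: masslam PN.emeasure_eq_measure)
      next
        case False
        then have "j = n" using that by simp
        then show ?thesis using mCn grI[of j] by (simp add: masslam PN.emeasure_eq_measure)
      qed
      obtain \<psi> where \<psi>m: "\<psi> \<in> borel_measurable N"
        and \<psi>law: "\<And>i E. i \<le> n \<Longrightarrow> E \<in> sets borel \<Longrightarrow> emeasure N (\<psi> -` E \<inter> C i) = emeasure (lam i) E"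
        using realize_family[OF fN naN Cs Cdisj Ccov flam slam eqm] by blast
      have \<psi>M: "\<psi> \<in> M \<rightarrow>\<^sub>M borel" using \<psi>m unfolding measN .
      have Csp: "C i \<subseteq> space N" if "i \<le> n" for i using Cs[of i] by (rule sets.sets_into_space)
      have preC: "\<psi> -` E \<inter> C i \<in> sets N" if "E \<in> sets borel" for E i
      proof -
        have "\<psi> -` E \<inter> space N \<in> sets N" using \<psi>m that by (rule measurable_sets)
        then have "(\<psi> -` E \<inter> space N) \<inter> C i \<in> sets N" using Cs[of i] by (rule sets.Int)
        moreover have "(\<psi> -` E \<inter> space N) \<inter> C i = \<psi> -` E \<inter> C i"
          using sets.sets_into_space[OF Cs[of i]] by blast
        ultimately show ?thesis by simp
      qed
      have law: "distr N borel \<psi> = \<mu>"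
      proof (rule measure_eqI)
        show "sets (distr N borel \<psi>) = sets \<mu>" using s\<mu> by simp
        fix E assume "E \<in> sets (distr N borel \<psi>)"
        then have E: "E \<in> sets borel" by simp
        have "emeasure (distr N borel \<psi>) E = emeasure N (\<psi> -` E \<inter> space N)"
          using \<psi>m E by (rule emeasure_distr)
        also have "\<psi> -` E \<inter> space N = (\<Union>i\<le>n. \<psi> -` E \<inter> C i)" unfolding Ccov[symmetric] by blast
        also have "emeasure N (\<Union>i\<le>n. \<psi> -` E \<inter> C i) = (\<Sum>i\<le>n. emeasure N (\<psi> -` E \<inter> C i))"
        proof (rule sum_emeasure[symmetric])
          show "(\<lambda>i. \<psi> -` E \<inter> C i) ` {..n} \<subseteq> sets N" using preC[OF E] by blast
          show "disjoint_family_on (\<lambda>i. \<psi> -` E \<inter> C i) {..n}"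
            unfolding disjoint_family_on_def using Cdisj by auto
        qed simp
        also have "\<dots> = (\<Sum>i\<le>n. emeasure (lam i) E)" using \<psi>law E by simp
        also have "\<dots> = (\<Sum>i\<le>n. \<integral>\<^sup>+x. ennreal (gr i x) * indicator E x \<partial>\<mu>)" using elam E by simp
        also have "\<dots> = (\<integral>\<^sup>+x. (\<Sum>i\<le>n. ennreal (gr i x) * indicator E x) \<partial>\<mu>)"
          using grm\<mu> E s\<mu> by (intro nn_integral_sum[symmetric]) auto
        also have "\<dots> = (\<integral>\<^sup>+x. indicator E x \<partial>\<mu>)"
        proof (rule nn_integral_cong)
          fix x
          have "(\<Sum>i\<le>n. ennreal (gr i x) * indicator E x) = (\<Sum>i\<le>n. ennreal (gr i x)) * indicator E x"
            by (simp add: sum_distrib_right)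
          also have "(\<Sum>i\<le>n. ennreal (gr i x)) = ennreal (\<Sum>i\<le>n. gr i x)"
            using gr01 by (intro sum_ennreal) auto
          finally show "(\<Sum>i\<le>n. ennreal (gr i x) * indicator E x) = indicator E x"
            using grsum[of x] by simp
        qed
        also have "\<dots> = emeasure \<mu> E" using E s\<mu> by simp
        finally show "emeasure (distr N borel \<psi>) E = emeasure \<mu> E" .
      qed
      define Z where "Z = (\<Union>j<n. \<psi> -` (- F j) \<inter> C j)"
      have Fcs: "- F j \<in> sets borel" for j using Fc[of j] by (intro borel_open) (simp add: open_Compl)
      have Znull: "Z \<in> null_sets N" unfolding Z_def
      proof (rule null_sets_UN')
        fix j assume j: "j \<in> {..<n}"
        have "emeasure N (\<psi> -` (- F j) \<inter> C j) = emeasure (lam j) (- F j)"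
          using \<psi>law[OF _ Fcs[of j]] j by simp
        also have "\<dots> = (\<integral>\<^sup>+x. ennreal (gr j x) * indicator (- F j) x \<partial>\<mu>)" using elam[OF Fcs] by simp
        also have "\<dots> = (\<integral>\<^sup>+x. 0 \<partial>\<mu>)"
          using j by (intro nn_integral_cong) (simp add: gr_def indicator_def)
        finally have "emeasure N (\<psi> -` (- F j) \<inter> C j) = 0" by simp
        then show "\<psi> -` (- F j) \<inter> C j \<in> null_sets N" using preC[OF Fcs[of j], of j] by blast
      qed simp
      have AEb: "AE p in N. \<rho> (\<phi> p) (\<psi> p) \<le> \<epsilon> / 2 + indicator (C n) p"
      proof (rule AE_I'[OF Znull], rule subsetI)
        fix p assume "p \<in> {p \<in> space N. \<not> \<rho> (\<phi> p) (\<psi> p) \<le> \<epsilon> / 2 + indicator (C n) p}"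
        then have p: "p \<in> space N" and nb: "\<not> \<rho> (\<phi> p) (\<psi> p) \<le> \<epsilon> / 2 + indicator (C n) p" by auto
        show "p \<in> Z"
        proof (rule ccontr)
          assume pZ: "p \<notin> Z"
          obtain i where i: "i \<le> n" "p \<in> C i" using p Ccov by blast
          show False
          proof (cases "i < n")
            case False
            then have "i = n" using i by simp
            then have "indicator (C n) p = (1::real)" using i by simp
            then show False using nb \<rho>1[of "\<phi> p" "\<psi> p"] \<epsilon>pos by simp
          next
            case True
            then have "p \<in> B i" using i CC[OF True] by (auto simp: C_def)
            then have "\<phi> p \<in> U i" by (simp add: B_def)
            then obtain y where y: "y \<in> F i" "dist (\<phi> p) y < \<gamma>" using Unear by blast
            have "\<psi> p \<in> F i" using pZ i True by (auto simp: Z_def)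
            then have "dist y (\<psi> p) < 2 * rr k"
              using y(1) F(1)[of i] Dball[of i] by (metis dist_commute dist_triangle_less_add mem_ball mult_2 subsetD)
            then have "dist (\<phi> p) (\<psi> p) < \<delta>"
              using y(2) \<gamma>\<delta> k \<delta>(1) dist_triangle[of "\<phi> p" "\<psi> p" y] by linarith
            then have "\<rho> (\<phi> p) (\<psi> p) < \<epsilon> / 2" by (rule \<delta>(2))
            moreover have "0 \<le> (indicator (C n) p :: real)" by simp
            ultimately show False using nb by linarith
          qed
        qed
      qed
      have intC: "integrable N (\<lambda>p. \<epsilon> / 2 + indicator (C n) p)"
        using Cs[of n] by (intro Bochner_Integration.integrable_add) (auto simp: integrable_indicator_iff PN.emeasure_finite top.not_eq_extremum[symmetric])
      have "rhoM \<rho> M \<phi> \<psi> = (\<integral>p. \<rho> (\<phi> p) (\<psi> p) \<partial>N)" by (simp add: rhoM_def N_def)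
      also have "\<dots> \<le> (\<integral>p. \<epsilon> / 2 + indicator (C n) p \<partial>N)"
        by (rule integral_mono_AE'[OF intC AEb]) (use \<epsilon>pos in auto)
      also have "\<dots> = \<epsilon> / 2 + measure N (C n)"
        using Cs[of n] Csp[of n] by (subst Bochner_Integration.integral_add)
          (auto simp: integrable_indicator_iff PN.emeasure_finite top.not_eq_extremum[symmetric] PN.prob_space Int_absorb2)
      finally have r1: "rhoM \<rho> M \<phi> \<psi> \<le> \<epsilon> / 2 + measure N (C n)" .
      have sD: "(\<Sum>j<n. measure \<mu> (D j)) = measure \<mu> (\<Union>j<n. D j)"
        by (rule measure_finite_Union[symmetric]) (use Ds s\<mu> Ddisj in \<open>auto simp: disjoint_family_on_def P\<mu>.emeasure_finite\<close>)
      have "(\<Sum>j<n. measure \<mu> (D j) - a) \<le> (\<Sum>j<n. measure \<mu> (F j))"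
        using F(3) by (intro sum_mono) (simp add: algebra_simps)
      then have s1: "(\<Sum>j<n. measure \<mu> (D j)) - real n * a \<le> (\<Sum>j<n. measure \<mu> (F j))"
        by (simp add: sum_subtractf)
      have "(\<Sum>j<n. measure \<mu> (F j) - a) \<le> (\<Sum>j<n. c j)"
        using clow by (intro sum_mono) auto
      then have s2: "(\<Sum>j<n. measure \<mu> (F j)) - real n * a \<le> (\<Sum>j<n. c j)"
        by (simp add: sum_subtractf)
      have "(\<Sum>j<n. measure \<mu> (D j)) - real n * a - real n * a \<le> (\<Sum>j<n. c j)"
        using s1 s2 by linarith
      then have "1 - \<epsilon> / 12 - 2 * (real n * a) < (\<Sum>j<n. c j)" using sD n by linarith
      then have "measure N (C n) < \<epsilon> / 4" using mCn na by linarith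
      then have "rhoM \<rho> M \<phi> \<psi> < \<epsilon>" using r1 \<epsilon>pos by linarith
      then show ?thesis using \<psi>M law by (intro bexI[of _ \<psi>]) (auto simp: N_def)
      qed
    qed
  qed
qed

end
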